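(* Let $(M,g,S)$, $p$, $u$, $\varphi$, $\alpha_1$ and $e_1,e_2,e_3$ be as in the context. Give each $v\in\alpha_1$ coordinates $(x,y,z)$ by $v=xe_1+ye_2+ze_3$. For $a\in\mathbb R$, the sphere $s_1=\{v\in\alpha_1:\tilde g(v,v)=a\}$ has the equation $$2(\cos\varphi)(x^2-y^2+z^2)+2\sqrt{1-2\cos^2\varphi}\,(xy+yz)=a.$$
   Context: $M$ is a 4-dimensional differentiable manifold with a positive definite metric $g$ and a tensor field $S$ of type $(1,1)$ whose components in some local coordinate system form the matrix with rows $(0,1,0,0)$, $(0,0,1,0)$, $(0,0,0,1)$, $(-1,0,0,0)$; hence $S^4=-\mathrm{id}$, and $g(Su,Sv)=g(u,v)$ for all vector fields $u,v$. The associated metric is $\tilde g(u,v)=g(u,Sv)+g(Su,v)$. Here $p\in M$, $u\in T_pM$ is a $g$-unit vector such that $\{u,Su,S^2u,S^3u\}$ is a basis of $T_pM$, $\varphi=\angle(u,Su)$ (so $\cos\varphi=g(u,Su)$; it is known that $\frac{\pi}{4}<\varphi<\frac{3\pi}{4}$), $\alpha_1=\mathrm{span}\{u,Su,S^2u\}$, and $e_1=u$, $e_2=\frac{(-\cos\varphi)u+Su-(\cos\varphi)S^2u}{\sqrt{1-2\cos^2\varphi}}$, $e_3=S^2u$ (a $g$-orthonormal basis of $\alpha_1$). *)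

theory Defs
  imports "HOL-Analysis.Analysis"
begin

text \<open>Pointwise model: T_pM is identified with real^4 via the coordinate basis of the
local chart in which S has the given component matrix.\<close>

definition Smat :: "real^4^4" where
  "Smat = (\<chi> i j. if (i = 1 \<and> j = 2) \<or> (i = 2 \<and> j = 3) \<or> (i = 3 \<and> j = 4) then 1
                   else if i = 4 \<and> j = 1 then -1 else 0)"

definition Sop :: "real^4 \<Rightarrow> real^4" where
  "Sop v = Smat *v v"

definition gmet :: "real^4^4 \<Rightarrow> real^4 \<Rightarrow> real^4 \<Rightarrow> real" where
  "gmet G u v = u \<bullet> (G *v v)"

definition gtil :: "real^4^4 \<Rightarrow> real^4 \<Rightarrow> real^4 \<Rightarrow> real" where
  "gtil G u v = gmet G u (Sop v) + gmet G (Sop u) v"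

end

theory Submission imports Defs begin
lemma Sop_add: "Sop (v + w) = Sop v + Sop w" unfolding Sop_def by (simp add: matrix_vector_right_distrib)
lemma Sop_scale: "Sop (r *\<^sub>R v) = r *\<^sub>R Sop v" unfolding Sop_def by (simp add: matrix_vector_mult_scaleR)
lemma Sop_minus: "Sop (v - w) = Sop v - Sop w" unfolding Sop_def by (simp add: matrix_vector_mult_diff_distrib)
lemma Sop4: "Sop (Sop (Sop (Sop v))) = - v"
  unfolding Sop_def Smat_def by (simp add: vec_eq_iff forall_4 matrix_vector_mult_def sum_4)
lemma g_addl: "gmet G (v + w) x = gmet G v x + gmet G w x" unfolding gmet_def by (simp add: inner_add_left)
lemma g_addr: "gmet G x (v + w) = gmet G x v + gmet G x w" unfolding gmet_def by (simp add: matrix_vector_right_distrib inner_add_right)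
lemma g_diffl: "gmet G (v - w) x = gmet G v x - gmet G w x" unfolding gmet_def by (simp add: inner_diff_left)
lemma g_diffr: "gmet G x (v - w) = gmet G x v - gmet G x w" unfolding gmet_def by (simp add: matrix_vector_mult_diff_distrib inner_diff_right)
lemma g_scl: "gmet G (r *\<^sub>R v) x = r * gmet G v x" unfolding gmet_def by simp
lemma g_scr: "gmet G x (r *\<^sub>R v) = r * gmet G x v" unfolding gmet_def by (simp add: matrix_vector_mult_scaleR)
lemma g_negl: "gmet G (- v) x = - gmet G v x" unfolding gmet_def by simp
lemma g_negr: "gmet G x (- v) = - gmet G x v" by (metis g_scr scaleR_minus1_left mult_minus1)
lemma g_sym: "transpose G = G \<Longrightarrow> gmet G v w = gmet G w v"
  unfolding gmet_def by (metis dot_lmul_matrix vector_transpose_matrix inner_commute)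

lemma main:
  fixes G :: "real^4^4" and u :: "real^4" and c A B C :: real
  assumes G_sym: "transpose G = G"
    and S_isom: "\<forall>v w. gmet G (Sop v) (Sop w) = gmet G v w"
    and u_unit: "gmet G u u = 1"
    and cdef: "c = gmet G u (Sop u)"
  shows "gtil G (A *\<^sub>R u + B *\<^sub>R Sop u + C *\<^sub>R Sop (Sop u)) (A *\<^sub>R u + B *\<^sub>R Sop u + C *\<^sub>R Sop (Sop u))
     = 2 * (c * (A^2+B^2+C^2) + B * (A + C))"
proof -
  define U1 where "U1 = Sop u"
  define U2 where "U2 = Sop U1"
  define U3 where "U3 = Sop U2"
  have S3: "Sop U3 = - u" unfolding U1_def U2_def U3_def by (rule Sop4)
  have gs: "\<And>v w. gmet G v w = gmet G w v" using g_sym[OF G_sym] by blast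
  have i: "\<And>v w. gmet G (Sop v) (Sop w) = gmet G v w" using S_isom by blast
  have a1: "gmet G U1 U1 = 1" unfolding U1_def using i u_unit by simp
  have a2: "gmet G U2 U2 = 1" unfolding U2_def using i a1 by simp
  have b1: "gmet G U1 U2 = c" unfolding U2_def U1_def cdef using i by simp
  have b2: "gmet G U2 U3 = c" unfolding U3_def using i b1 U2_def by simp
  have "gmet G u U2 = gmet G U2 (Sop U3)" unfolding U3_def U2_def U1_def using i by simp
  also have "\<dots> = - gmet G u U2" using S3 g_negr gs by simp
  finally have d0: "gmet G u U2 = 0" by simp
  have "gmet G u U3 = gmet G U1 (Sop U3)" unfolding U3_def U2_def U1_def by (rule i[of u "Sop (Sop (Sop u))", symmetric])
  also have "\<dots> = - c" using S3 g_negr gs cdef U1_def by simp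
  finally have d1: "gmet G u U3 = - c" .
  have d2: "gmet G U1 U3 = 0" using i[of u "Sop (Sop u)"] d0 unfolding U3_def U2_def U1_def by simp
  have c0: "gmet G u U1 = c" using cdef U1_def by simp
  define v where "v = A *\<^sub>R u + B *\<^sub>R U1 + C *\<^sub>R U2"
  have Sv: "Sop v = A *\<^sub>R U1 + B *\<^sub>R U2 + C *\<^sub>R U3" unfolding v_def U1_def U2_def U3_def by (simp add: Sop_add Sop_scale)
  have "gtil G v v = 2 * gmet G v (Sop v)" unfolding gtil_def using gs by simp
  also have "gmet G v (Sop v) = c * (A^2+B^2+C^2) + B * (A + C)"
    unfolding Sv unfolding v_def
    by (simp add: g_addl g_addr g_scl g_scr a1 a2 b1 b2 d0 d1 d2 c0 gs[of U1 u] gs[of U2 u] gs[of U2 U1] gs[of U3 u] gs[of U3 U1] gs[of U3 U2] u_unit power2_eq_square algebra_simps)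
  finally show ?thesis unfolding v_def U1_def U2_def by simp
qed
lemma main2:
  fixes G :: "real^4^4" and u :: "real^4" and c A B C :: real
  assumes G_sym: "transpose G = G"
    and S_isom: "\<forall>v w. gmet G (Sop v) (Sop w) = gmet G v w"
    and u_unit: "gmet G u u = 1"
    and cdef: "c = gmet G u (Sop u)"
  shows "gmet G (A *\<^sub>R u + B *\<^sub>R Sop u + C *\<^sub>R Sop (Sop u)) (A *\<^sub>R u + B *\<^sub>R Sop u + C *\<^sub>R Sop (Sop u))
     = A^2+B^2+C^2 + 2*c*(A*B+B*C)"
proof -
  define U1 where "U1 = Sop u"
  define U2 where "U2 = Sop U1"
  define U3 where "U3 = Sop U2"
  have S3: "Sop U3 = - u" unfolding U1_def U2_def U3_def by (rule Sop4)
  have gs: "\<And>v w. gmet G v w = gmet G w v" using g_sym[OF G_sym] by blast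
  have i: "\<And>v w. gmet G (Sop v) (Sop w) = gmet G v w" using S_isom by blast
  have a1: "gmet G U1 U1 = 1" unfolding U1_def using i u_unit by simp
  have a2: "gmet G U2 U2 = 1" unfolding U2_def using i a1 by simp
  have b1: "gmet G U1 U2 = c" unfolding U2_def U1_def cdef using i by simp
  have b2: "gmet G U2 U3 = c" unfolding U3_def using i b1 U2_def by simp
  have "gmet G u U2 = gmet G U2 (Sop U3)" unfolding U3_def U2_def U1_def using i by simp
  also have "\<dots> = - gmet G u U2" using S3 g_negr gs by simp
  finally have d0: "gmet G u U2 = 0" by simp
  have "gmet G u U3 = gmet G U1 (Sop U3)" unfolding U3_def U2_def U1_def by (rule i[of u "Sop (Sop (Sop u))", symmetric])
  also have "\<dots> = - c" using S3 g_negr gs cdef U1_def by simp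
  finally have d1: "gmet G u U3 = - c" .
  have d2: "gmet G U1 U3 = 0" using i[of u "Sop (Sop u)"] d0 unfolding U3_def U2_def U1_def by simp
  have c0: "gmet G u U1 = c" using cdef U1_def by simp
  define v where "v = A *\<^sub>R u + B *\<^sub>R U1 + C *\<^sub>R U2"
  have Sv: "Sop v = A *\<^sub>R U1 + B *\<^sub>R U2 + C *\<^sub>R U3" unfolding v_def U1_def U2_def U3_def by (simp add: Sop_add Sop_scale)
  have "gmet G v v = A^2+B^2+C^2 + 2*c*(A*B+B*C)"
    unfolding v_def
    by (simp add: g_addl g_addr g_scl g_scr a1 a2 b1 b2 d0 d1 d2 c0 gs[of U1 u] gs[of U2 u] gs[of U2 U1] gs[of U3 u] gs[of U3 U1] gs[of U3 U2] u_unit power2_eq_square algebra_simps)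
  then show ?thesis unfolding v_def U1_def U2_def by simp
qed

lemma card4_dist: "card {a,b,c,d::'a} = 4 \<Longrightarrow> a \<noteq> b \<and> a \<noteq> c \<and> a \<noteq> d \<and> b \<noteq> c \<and> b \<noteq> d \<and> c \<noteq> d"
  by (auto simp: card_insert_if split: if_splits)

theorem theorem4p2:
  fixes G :: "real^4^4" and u e1 e2 e3 :: "real^4" and \<phi> a :: real
  assumes G_sym: "transpose G = G"
    and G_pos: "\<forall>v. v \<noteq> 0 \<longrightarrow> gmet G v v > 0"
    and S_isom: "\<forall>v w. gmet G (Sop v) (Sop w) = gmet G v w"
    and u_unit: "gmet G u u = 1"
    and u_basis: "independent {u, Sop u, Sop (Sop u), Sop (Sop (Sop u))}"
      "span {u, Sop u, Sop (Sop u), Sop (Sop (Sop u))} = UNIV"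
      "card {u, Sop u, Sop (Sop u), Sop (Sop (Sop u))} = 4"
    and phi_def: "\<phi> = arccos (gmet G u (Sop u))"
    and e1_def: "e1 = u"
    and e2_def: "e2 = (1 / sqrt (1 - 2 * (cos \<phi>)\<^sup>2)) *\<^sub>R
                      ((- cos \<phi>) *\<^sub>R u + Sop u - (cos \<phi>) *\<^sub>R Sop (Sop u))"
    and e3_def: "e3 = Sop (Sop u)"
  shows "\<forall>x y z. (x *\<^sub>R e1 + y *\<^sub>R e2 + z *\<^sub>R e3
                   \<in> {v \<in> span {u, Sop u, Sop (Sop u)}. gtil G v v = a})
            \<longleftrightarrow> 2 * cos \<phi> * (x\<^sup>2 - y\<^sup>2 + z\<^sup>2)
                + 2 * sqrt (1 - 2 * (cos \<phi>)\<^sup>2) * (x * y + y * z) = a"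
proof (intro allI)
  fix x y z
  define c where "c = gmet G u (Sop u)"
  define U1 where "U1 = Sop u"
  define U2 where "U2 = Sop U1"
  define U3 where "U3 = Sop U2"
  define Bs where "Bs = {u, U1, U2, U3}"
  have dist: "u \<noteq> U1 \<and> u \<noteq> U2 \<and> u \<noteq> U3 \<and> U1 \<noteq> U2 \<and> U1 \<noteq> U3 \<and> U2 \<noteq> U3"
    using card4_dist[OF u_basis(3)] unfolding U1_def U2_def U3_def by blast
  have ind: "independent Bs" using u_basis(1) unfolding Bs_def U1_def U2_def U3_def .
  define w where "w = c *\<^sub>R u + (-1) *\<^sub>R U1 + c *\<^sub>R U2"
  have wnz: "w \<noteq> 0"
  proof
    assume "w = 0"
    then have "U1 = c *\<^sub>R u + c *\<^sub>R U2" unfolding w_def by (simp add: algebra_simps)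
    moreover have "u \<in> Bs - {U1}" "U2 \<in> Bs - {U1}" using dist unfolding Bs_def by auto
    ultimately have "U1 \<in> span (Bs - {U1})"
      by (metis span_add span_base span_scale)
    moreover have "U1 \<in> Bs" unfolding Bs_def by simp
    ultimately have "dependent Bs" unfolding dependent_def by blast
    with ind show False by simp
  qed
  have "gmet G w w = c^2 + (-1)^2 + c^2 + 2*c*(c*(-1) + (-1)*c)"
    unfolding w_def U2_def U1_def by (rule main2[OF G_sym S_isom u_unit c_def])
  moreover have "gmet G w w > 0" using G_pos wnz by blast
  ultimately have tpos: "1 - 2*c^2 > 0" by (simp add: power2_eq_square algebra_simps)
  have cb: "-1 \<le> c \<and> c \<le> 1"
  proof -
    have "c^2 \<le> 1" using tpos by simp
    then have "\<bar>c\<bar> \<le> 1" by (simp add: abs_square_le_1)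
    then show ?thesis by linarith
  qed
  have cphi: "cos \<phi> = c" using phi_def c_def cb by (simp add: cos_arccos)
  define t where "t = 1 - 2*c^2"
  define k where "k = 1 / sqrt t"
  have tp: "t > 0" using tpos t_def by simp
  have k1: "k * t = sqrt t" unfolding k_def using tp by (simp add: real_div_sqrt)
  have k2: "k^2 * t = 1" unfolding k_def using tp by (simp add: power_divide)
  define A where "A = x - y*k*c"
  define B where "B = y*k"
  define C where "C = z - y*k*c"
  have veq: "x *\<^sub>R e1 + y *\<^sub>R e2 + z *\<^sub>R e3 = A *\<^sub>R u + B *\<^sub>R Sop u + C *\<^sub>R Sop (Sop u)"
    unfolding e1_def e2_def e3_def cphi A_def B_def C_def k_def t_def
    by (simp add: algebra_simps)
  have insp: "A *\<^sub>R u + B *\<^sub>R Sop u + C *\<^sub>R Sop (Sop u) \<in> span {u, Sop u, Sop (Sop u)}"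
    by (intro span_add span_scale span_base) auto
  have gt: "gtil G (A *\<^sub>R u + B *\<^sub>R Sop u + C *\<^sub>R Sop (Sop u)) (A *\<^sub>R u + B *\<^sub>R Sop u + C *\<^sub>R Sop (Sop u))
     = 2 * (c * (A^2+B^2+C^2) + B * (A + C))" by (rule main[OF G_sym S_isom u_unit c_def])
  have alg: "2 * (c * (A^2+B^2+C^2) + B * (A + C)) = 2 * c * (x\<^sup>2 - y\<^sup>2 + z\<^sup>2) + 2 * sqrt t * (x * y + y * z)"
  proof -
    have "c * (A^2+B^2+C^2) + B * (A + C) = c*(x^2+z^2) + y*(x+z)*(k*t) - c*y^2*(k^2*t)"
      unfolding A_def B_def C_def t_def by (simp add: power2_eq_square algebra_simps)
    also have "\<dots> = c*(x^2+z^2) + y*(x+z) * sqrt t - c*y^2" by (simp only: k1 k2 mult_1_right)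
    finally show ?thesis by (simp add: algebra_simps power2_eq_square)
  qed
  show "(x *\<^sub>R e1 + y *\<^sub>R e2 + z *\<^sub>R e3
                   \<in> {v \<in> span {u, Sop u, Sop (Sop u)}. gtil G v v = a})
            \<longleftrightarrow> 2 * cos \<phi> * (x\<^sup>2 - y\<^sup>2 + z\<^sup>2)
                + 2 * sqrt (1 - 2 * (cos \<phi>)\<^sup>2) * (x * y + y * z) = a"
    unfolding veq using insp gt alg cphi t_def by simp
qed

end
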